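(* For any $n\times n$ symmetric matrix $w$ with nonnegative entries and $H=\sum_{i<j}w_{ij}E_{ij}$, \[\lambda_{\max}(H)\le\frac{\sum_{i<j}w_{ij}+\mathrm{LP}(w)}{2},\] where $\mathrm{LP}(w)$ is the optimum of the fractional matching linear program $\max\sum_{i<j}w_{ij}x_{ij}$ subject to $\sum_{j\ne i}x_{ij}\le1$ for all $i\in[n]$ and $x_{ij}\ge0$.
   Context: $E_{ij}$ is the projection onto $\ket{\mathrm{EPR}}=\frac{\ket{00}+\ket{11}}{\sqrt2}$ on qubits $i,j$ tensored with identity elsewhere; $\lambda_{\max}(H)$ is the largest eigenvalue. You may use the star bound: for any $n$-qubit state $\rho$ and $i\in[n]$, $\sum_{j\ne i}\max(0,2\operatorname{tr}(\rho E_{ij})-1)\le1$. *)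

theory Defs
  imports Complex_Main "Jordan_Normal_Form.Matrix" "Jordan_Normal_Form.Char_Poly"
begin

(* Computational basis of n qubits: index b < 2^n; the state of qubit k is bit k of b. *)
definition qbit :: "nat \<Rightarrow> nat \<Rightarrow> nat" where
  "qbit b k = (b div 2 ^ k) mod 2"

(* E_ij = |EPR><EPR| on qubits i,j tensored with the identity on the other qubits,
   where |EPR> = (|00> + |11>)/sqrt 2.  Entry (r,c):
   <r|E_ij|c> = [r_k = c_k for all k other than i,j] * <r_i r_j|EPR><EPR|c_i c_j>,
   and <ab|EPR><EPR|cd> = (1/2) [a = b] [c = d]. *)
definition epr_proj :: "nat \<Rightarrow> nat \<Rightarrow> nat \<Rightarrow> complex mat" where
  "epr_proj n i j = mat (2 ^ n) (2 ^ n) (\<lambda>(r, c).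
     if (\<forall>k<n. k \<noteq> i \<longrightarrow> k \<noteq> j \<longrightarrow> qbit r k = qbit c k)
     then (if qbit r i = qbit r j then 1 / sqrt 2 else 0) * (if qbit c i = qbit c j then 1 / sqrt 2 else 0)
     else 0)"

definition ham :: "nat \<Rightarrow> (nat \<Rightarrow> nat \<Rightarrow> real) \<Rightarrow> complex mat" where
  "ham n w = mat (2 ^ n) (2 ^ n) (\<lambda>(r, c).
     \<Sum>i<n. \<Sum>j\<in>{i<..<n}. complex_of_real (w i j) * epr_proj n i j $$ (r, c))"

(* largest eigenvalue (of a Hermitian matrix, whose eigenvalues are real) *)
definition lambda_max :: "complex mat \<Rightarrow> real" where
  "lambda_max A = Max (Re ` {k. eigenvalue A k})"

(* x is indexed by unordered pairs: x_{ij} for i<j stored as x i j; x_{ji} = x_{ij} *)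
definition frac_matching :: "nat \<Rightarrow> (nat \<Rightarrow> nat \<Rightarrow> real) \<Rightarrow> bool" where
  "frac_matching n x \<longleftrightarrow>
     (\<forall>i<n. \<forall>j<n. i < j \<longrightarrow> x i j \<ge> 0) \<and>
     (\<forall>i<n. (\<Sum>j\<in>{..<n} - {i}. x (min i j) (max i j)) \<le> 1)"

definition LP :: "nat \<Rightarrow> (nat \<Rightarrow> nat \<Rightarrow> real) \<Rightarrow> real" where
  "LP n w = Sup {\<Sum>i<n. \<Sum>j\<in>{i<..<n}. w i j * x i j | x. frac_matching n x}"

end

theory Submission
  imports Defs "Jordan_Normal_Form.Spectral_Radius"
begin


lemma qbit_bit: "qbit b k = (if bit b k then 1 else 0)"
  by (simp add: qbit_def bit_iff_odd odd_iff_mod_2_eq_one)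

lemma bit_flip: "bit (flip_bit k (b::nat)) m \<longleftrightarrow> (k = m \<longleftrightarrow> \<not> bit b m)"
  by (simp add: bit_flip_bit_iff)

lemma flip_lt: "(b::nat) < 2^n \<Longrightarrow> k < n \<Longrightarrow> flip_bit k b < 2^n"
  by (metis take_bit_flip_bit_eq take_bit_nat_eq_self_iff leD)

lemma flip_flip[simp]: "flip_bit k (flip_bit k (b::nat)) = b"
  by (rule bit_eqI) (auto simp: bit_flip)

lemma flip_comm: "flip_bit k (flip_bit m (b::nat)) = flip_bit m (flip_bit k b)"
  by (rule bit_eqI) (auto simp: bit_flip)

lemma bits_eq: "(r::nat) < 2^n \<Longrightarrow> c < 2^n \<Longrightarrow> (\<And>m. m < n \<Longrightarrow> bit r m = bit c m) \<Longrightarrow> r = c"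
  by (metis bit_eqI bit_take_bit_iff take_bit_nat_eq_self_iff)



definition ff :: "nat \<Rightarrow> nat \<Rightarrow> nat \<Rightarrow> nat" where
  "ff i j r = flip_bit i (flip_bit j r)"

lemma bit_ff: "bit (ff i j r) m \<longleftrightarrow> (if m = i \<or> m = j then \<not> bit r m else bit r m)" if "i \<noteq> j"
  using that by (auto simp: ff_def bit_flip)

lemma ff_lt: "r < 2^n \<Longrightarrow> i < n \<Longrightarrow> j < n \<Longrightarrow> ff i j r < 2^n"
  by (simp add: ff_def flip_lt)

lemma ff_ff[simp]: "ff i j (ff i j r) = r"
  by (simp add: ff_def flip_comm[of i j])

lemma ff_sym: "ff i j r = ff j i r"
  by (simp add: ff_def flip_comm)

lemma ff_neq: "i \<noteq> j \<Longrightarrow> ff i j r \<noteq> r"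
  by (metis bit_ff)

lemma qbit_eq: "qbit r k = qbit c m \<longleftrightarrow> (bit r k \<longleftrightarrow> bit c m)"
  by (simp add: qbit_bit)

lemma sqrt2c: "(1 / complex_of_real (sqrt 2)) * (1 / complex_of_real (sqrt 2)) = 1/2"
proof -
  have "complex_of_real (sqrt 2) * complex_of_real (sqrt 2) = 2"
    by (simp flip: of_real_mult)
  then show ?thesis by (simp add: divide_divide_eq_left)
qed


lemma sqrt2r: "(1 / sqrt 2) * (1 / sqrt 2) = (1/2::real)"
  by (simp add: divide_divide_eq_left)

lemma E_entry:
  assumes "r < 2^n" "c < 2^n" "i < n" "j < n" "i \<noteq> j"
  shows "epr_proj n i j $$ (r,c) = (if (bit r i = bit r j) \<and> (c = r \<or> c = ff i j r) then 1/2 else 0)"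
proof -
  have A: "(\<forall>k<n. k \<noteq> i \<longrightarrow> k \<noteq> j \<longrightarrow> (bit r k \<longleftrightarrow> bit c k)) \<and> (bit r i = bit r j) \<and> (bit c i = bit c j)
     \<longleftrightarrow> (bit r i = bit r j) \<and> (c = r \<or> c = ff i j r)"
  proof
    assume h: "(\<forall>k<n. k \<noteq> i \<longrightarrow> k \<noteq> j \<longrightarrow> (bit r k \<longleftrightarrow> bit c k)) \<and> (bit r i = bit r j) \<and> (bit c i = bit c j)"
    then have h1: "\<And>k. k < n \<Longrightarrow> k \<noteq> i \<Longrightarrow> k \<noteq> j \<Longrightarrow> bit c k = bit r k" and h2: "bit r i = bit r j"
      and h3: "bit c i = bit c j" by auto
    show "(bit r i = bit r j) \<and> (c = r \<or> c = ff i j r)"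
    proof (cases "bit c i = bit r i")
      case True
      have "c = r"
      proof (rule bits_eq[OF assms(2,1)])
        fix m assume "m < n"
        then show "bit c m = bit r m" using h1 h2 h3 True by (cases "m = i"; cases "m = j") simp_all
      qed
      then show ?thesis using h2 by blast
    next
      case False
      have "c = ff i j r"
      proof (rule bits_eq[OF assms(2) ff_lt[OF assms(1,3,4)]])
        fix m assume "m < n"
        then show "bit c m = bit (ff i j r) m" using h1 h2 h3 False bit_ff[OF assms(5), of r m]
          by (cases "m = i"; cases "m = j") simp_all
      qed
      then show ?thesis using h2 by blast
    qed
  next
    assume h: "(bit r i = bit r j) \<and> (c = r \<or> c = ff i j r)"
    then have h2: "bit r i = bit r j" and h4: "c = r \<or> c = ff i j r" by auto
    show "(\<forall>k<n. k \<noteq> i \<longrightarrow> k \<noteq> j \<longrightarrow> (bit r k \<longleftrightarrow> bit c k)) \<and> (bit r i = bit r j) \<and> (bit c i = bit c j)"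
    proof (intro conjI allI impI h2)
      fix k assume "k < n" "k \<noteq> i" "k \<noteq> j"
      then show "bit r k = bit c k" using h4 bit_ff[OF assms(5), of r k] by auto
    next
      show "bit c i = bit c j" using h4 h2 bit_ff[OF assms(5), of r i] bit_ff[OF assms(5), of r j] by auto
    qed
  qed
  have e: "epr_proj n i j $$ (r,c) = complex_of_real (if (\<forall>k<n. k \<noteq> i \<longrightarrow> k \<noteq> j \<longrightarrow> qbit r k = qbit c k)
     then (if qbit r i = qbit r j then 1 / sqrt 2 else 0) * (if qbit c i = qbit c j then 1 / sqrt 2 else 0)
     else 0)"
    unfolding epr_proj_def by (subst index_mat(1)) (use assms(1,2) in \<open>simp_all only: prod.case\<close>)
  show ?thesis unfolding e qbit_eq using A[symmetric] sqrt2r by (simp only:) auto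
qed


lemma E_apply:
  assumes "r < 2^n" "i < n" "j < n" "i \<noteq> j"
  shows "(\<Sum>c<2^n. epr_proj n i j $$ (r,c) * f c) =
     (if bit r i = bit r j then (f r + f (ff i j r)) / 2 else 0)"
proof -
  have "(\<Sum>c<2^n. epr_proj n i j $$ (r,c) * f c) =
     (\<Sum>c<2^n. (if bit r i = bit r j then ((if c = r then f c / 2 else 0) + (if c = ff i j r then f c / 2 else 0)) else 0))"
    using assms ff_neq[OF assms(4), of r] by (intro sum.cong) (auto simp: E_entry)
  also have "\<dots> = (if bit r i = bit r j then (f r + f (ff i j r)) / 2 else 0)"
    using assms ff_lt[OF assms(1-3)] by (auto simp: sum.distrib add_divide_distrib)
  finally show ?thesis .
qed

lemma sum_ff:
  assumes "i < n" "j < n"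
  shows "(\<Sum>r<2^n. g (ff i j r)) = (\<Sum>r<2^(n::nat). g r)"
  by (rule sum.reindex_bij_witness[where i="ff i j" and j="ff i j"]) (auto intro: ff_lt assms)

definition nrm :: "nat \<Rightarrow> (nat \<Rightarrow> complex) \<Rightarrow> real" where
  "nrm n f = (\<Sum>r<2^n. (cmod (f r))^2)"

definition Cf :: "nat \<Rightarrow> (nat \<Rightarrow> complex) \<Rightarrow> nat \<Rightarrow> nat \<Rightarrow> real" where
  "Cf n f i j = Re (\<Sum>r<2^n. if bit r i \<and> bit r j then cnj (f r) * f (ff i j r) else 0)"

definition Mf :: "nat \<Rightarrow> (nat \<Rightarrow> complex) \<Rightarrow> nat \<Rightarrow> nat \<Rightarrow> real" where
  "Mf n f i j = (\<Sum>r<2^n. if bit r i \<noteq> bit r j then (cmod (f r))^2 else 0)"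

definition yv :: "nat \<Rightarrow> (nat \<Rightarrow> complex) \<Rightarrow> nat \<Rightarrow> nat \<Rightarrow> real" where
  "yv n f i j = 2 * Cf n f i j - Mf n f i j"

lemma Re_cnj_swap: "Re (cnj a * b) = Re (cnj b * a)"
  by simp

lemma Q_eq:
  assumes "i < n" "j < n" "i \<noteq> j"
  shows "2 * Re (\<Sum>r<2^n. cnj (f r) * (\<Sum>c<2^n. epr_proj n i j $$ (r,c) * f c)) - nrm n f = yv n f i j"
proof -
  let ?g = "\<lambda>r. Re (cnj (f r) * f (ff i j r))"
  have s1: "(\<Sum>r<2^n. cnj (f r) * (\<Sum>c<2^n. epr_proj n i j $$ (r,c) * f c))
     = (\<Sum>r<2^n. cnj (f r) * (if bit r i = bit r j then (f r + f (ff i j r)) / 2 else 0))"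
    by (rule sum.cong) (simp_all add: E_apply assms)
  have pw: "2 * Re (cnj (f r) * (if bit r i = bit r j then (f r + f (ff i j r)) / 2 else 0))
     = (if bit r i = bit r j then (cmod (f r))^2 + ?g r else 0)" for r
  proof (cases "bit r i = bit r j")
    case True
    have cc: "Re (cnj (f r) * f r) = (cmod (f r))^2"
      by (simp add: cmod_power2 flip: power2_eq_square)
    have "cnj (f r) * ((f r + f (ff i j r)) / 2) = (cnj (f r) * f r + cnj (f r) * f (ff i j r)) / 2"
      by (simp add: distrib_left)
    then have "2 * Re (cnj (f r) * ((f r + f (ff i j r)) / 2)) = Re (cnj (f r) * f r) + Re (cnj (f r) * f (ff i j r))"
      by simp
    then show ?thesis using True cc by simp
  next
    case False
    then show ?thesis by simp
  qed
  have "2 * Re (\<Sum>r<2^n. cnj (f r) * (\<Sum>c<2^n. epr_proj n i j $$ (r,c) * f c))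
      = (\<Sum>r<2^n. if bit r i = bit r j then (cmod (f r))^2 + ?g r else 0)"
    unfolding s1 unfolding Re_sum sum_distrib_left pw ..
  also have "\<dots> = (\<Sum>r<2^n. if bit r i = bit r j then (cmod (f r))^2 else 0)
      + (\<Sum>r<2^n. if bit r i \<and> bit r j then ?g r else 0)
      + (\<Sum>r<2^n. if \<not> bit r i \<and> \<not> bit r j then ?g r else 0)"
    unfolding sum.distrib[symmetric] by (rule sum.cong) auto
  also have "(\<Sum>r<2^n. if \<not> bit r i \<and> \<not> bit r j then ?g r else 0)
      = (\<Sum>r<2^n. if \<not> bit (ff i j r) i \<and> \<not> bit (ff i j r) j then ?g (ff i j r) else 0)"
    by (rule sum_ff[OF assms(1,2), symmetric])
  also have "\<dots> = (\<Sum>r<2^n. if bit r i \<and> bit r j then ?g r else 0)"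
    using bit_ff[OF assms(3)] by (intro sum.cong) (auto simp: Re_cnj_swap[of "f (ff i j _)"])
  also have "nrm n f = (\<Sum>r<2^n. if bit r i = bit r j then (cmod (f r))^2 else 0) + Mf n f i j"
    unfolding nrm_def Mf_def sum.distrib[symmetric] by (rule sum.cong) auto
  ultimately show ?thesis
    unfolding yv_def Cf_def Re_sum by (simp add: if_distrib[of Re] cong: if_cong)
qed



lemma real_cs:
  fixes c :: "'a \<Rightarrow> real"
  assumes "finite T"
  shows "(\<Sum>j\<in>T. c j)^2 \<le> real (card T) * (\<Sum>j\<in>T. (c j)^2)"
proof -
  have "(\<Sum>j\<in>T. c j)^2 = (\<Sum>i\<in>T. \<Sum>j\<in>T. c i * c j)"
    by (simp add: power2_eq_square sum_product)
  also have "\<dots> \<le> (\<Sum>i\<in>T. \<Sum>j\<in>T. ((c i)^2 + (c j)^2) / 2)"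
  proof (intro sum_mono)
    fix i j
    have "0 \<le> (c i - c j)^2" by simp
    then show "c i * c j \<le> ((c i)^2 + (c j)^2) / 2" by (simp add: power2_eq_square algebra_simps)
  qed
  also have "\<dots> = (\<Sum>i\<in>T. (real (card T) * (c i)^2 + (\<Sum>j\<in>T. (c j)^2)) / 2)"
    by (simp add: sum.distrib add_divide_distrib sum_divide_distrib[symmetric])
  also have "\<dots> = real (card T) * (\<Sum>j\<in>T. (c j)^2)"
    by (simp add: sum.distrib add_divide_distrib sum_divide_distrib[symmetric] sum_distrib_left)
  finally show ?thesis .
qed

lemma complex_cs:
  fixes g :: "'a \<Rightarrow> complex"
  assumes "finite T"
  shows "(cmod (\<Sum>j\<in>T. g j))^2 \<le> real (card T) * (\<Sum>j\<in>T. (cmod (g j))^2)"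
proof -
  have "(cmod (\<Sum>j\<in>T. g j))^2 \<le> (\<Sum>j\<in>T. cmod (g j))^2"
    by (intro power_mono norm_sum) simp
  also have "\<dots> \<le> real (card T) * (\<Sum>j\<in>T. (cmod (g j))^2)"
    by (rule real_cs[OF assms])
  finally show ?thesis .
qed

lemma amgm:
  assumes "t > 0"
  shows "2 * Re (cnj z * a) \<le> t * (cmod z)^2 + (cmod a)^2 / t"
proof -
  have e1: "Re (cnj z * a) = Re z * Re a + Im z * Im a" by simp
  have "0 \<le> (t * Re z - Re a)^2 + (t * Im z - Im a)^2" by simp
  then have "t * (2 * (Re z * Re a + Im z * Im a)) \<le> t * (t * ((Re z)^2 + (Im z)^2)) + ((Re a)^2 + (Im a)^2)"
    by (simp add: power2_eq_square algebra_simps)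
  also have "\<dots> = t * (t * ((Re z)^2 + (Im z)^2) + ((Re a)^2 + (Im a)^2) / t)"
    using assms by (simp add: field_simps)
  finally have "2 * (Re z * Re a + Im z * Im a) \<le> t * ((Re z)^2 + (Im z)^2) + ((Re a)^2 + (Im a)^2) / t"
    using assms by (simp add: mult_le_cancel_left_pos)
  then show ?thesis by (simp add: cmod_power2)
qed



lemma sum_if_count:
  assumes "finite S"
  shows "(\<Sum>j\<in>S. if P j then (c::real) else 0) = c * real (card {j\<in>S. P j})"
proof -
  have "(\<Sum>j\<in>S. if P j then c else 0) = (\<Sum>j\<in>{j\<in>S. P j}. c)"
    using sum.inter_filter[OF assms, of "\<lambda>_. c" P] by simp
  then show ?thesis by (simp add: mult.commute)
qed

lemma star:
  assumes i: "i < n" and S: "S \<subseteq> {..<n}" and iS: "i \<notin> S"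
  shows "(\<Sum>j\<in>S. yv n f i j) \<le> nrm n f"
proof -
  have finS: "finite S" using S finite_subset by blast
  define w where "w r = (cmod (f r))^2" for r :: nat
  define Nr where "Nr r = real (card {j\<in>S. bit r j})" for r :: nat
  define Zr where "Zr r = real (card {j\<in>S. \<not> bit r j})" for r :: nat
  define a where "a r = (\<Sum>j\<in>S. if bit r j then f (ff i j r) else 0)" for r :: nat
  define B where "B r = (\<Sum>j\<in>S. if bit r j then w (ff i j r) else 0)" for r :: nat
  have jn: "j \<in> S \<Longrightarrow> j < n" for j using S by auto
  have ji: "j \<in> S \<Longrightarrow> i \<noteq> j" for j using iS by auto
  have w0: "w r \<ge> 0" for r by (simp add: w_def)
  have Z0: "Zr r \<ge> 0" for r by (simp add: Zr_def)
  have N0: "Nr r \<ge> 0" for r by (simp add: Nr_def)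
  have Msum: "(\<Sum>j\<in>S. Mf n f i j) = (\<Sum>r<2^n. w r * (if bit r i then Zr r else Nr r))"
  proof -
    have "(\<Sum>j\<in>S. Mf n f i j) = (\<Sum>r<2^n. \<Sum>j\<in>S. if bit r i \<noteq> bit r j then w r else 0)"
      unfolding Mf_def w_def by (rule sum.swap)
    also have "\<dots> = (\<Sum>r<2^n. w r * (if bit r i then Zr r else Nr r))"
    proof (rule sum.cong[OF refl])
      fix r
      show "(\<Sum>j\<in>S. if bit r i \<noteq> bit r j then w r else 0) = w r * (if bit r i then Zr r else Nr r)"
        unfolding sum_if_count[OF finS] Zr_def Nr_def by (cases "bit r i") simp_all
    qed
    finally show ?thesis .
  qed
  have Csum: "2 * (\<Sum>j\<in>S. Cf n f i j) = (\<Sum>r<2^n. if bit r i then 2 * Re (cnj (f r) * a r) else 0)"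
  proof -
    have "(\<Sum>j\<in>S. Cf n f i j) = Re (\<Sum>r<2^n. \<Sum>j\<in>S. if bit r i \<and> bit r j then cnj (f r) * f (ff i j r) else 0)"
      unfolding Cf_def Re_sum[symmetric] by (subst sum.swap) (rule refl)
    also have "\<dots> = Re (\<Sum>r<2^n. if bit r i then cnj (f r) * a r else 0)"
      unfolding a_def sum_distrib_left by (intro arg_cong[where f=Re] sum.cong refl) (auto intro!: sum.cong)
    finally show ?thesis by (simp add: Re_sum sum_distrib_left if_distrib[of Re] if_distrib[of "\<lambda>x. 2 * x"] cong: if_cong)
  qed
  have pw: "2 * Re (cnj (f r) * a r) \<le> (1 + Zr r) * w r + Nr r / (1 + Zr r) * B r" for r :: nat
  proof -
    have "2 * Re (cnj (f r) * a r) \<le> (1 + Zr r) * w r + (cmod (a r))^2 / (1 + Zr r)"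
      unfolding w_def by (rule amgm) (simp add: Zr_def)
    moreover have "(cmod (a r))^2 \<le> Nr r * B r"
    proof -
      have "a r = (\<Sum>j\<in>{j\<in>S. bit r j}. f (ff i j r))"
        unfolding a_def using finS by (simp add: sum.inter_filter)
      moreover have "B r = (\<Sum>j\<in>{j\<in>S. bit r j}. w (ff i j r))"
        unfolding B_def using finS by (simp add: sum.inter_filter)
      ultimately show ?thesis unfolding Nr_def w_def using finS by (simp add: complex_cs)
    qed
    ultimately show ?thesis
      using Z0[of r] by (smt (verit) divide_right_mono mult.commute times_divide_eq_left)
  qed
  have NZff: "Nr (ff i j r) = Nr r + 1 \<and> 1 + Zr (ff i j r) = Zr r" if "j \<in> S" "\<not> bit r j" for j r
  proof -
    have bf: "bit (ff i j r) m \<longleftrightarrow> (if m = j then \<not> bit r m else bit r m)" if "m \<in> S" for m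
      using bit_ff[OF ji[OF \<open>j\<in>S\<close>], of r m] iS that by auto
    have e1: "{m\<in>S. bit (ff i j r) m} = insert j {m\<in>S. bit r m}"
      using bf \<open>j\<in>S\<close> \<open>\<not> bit r j\<close> by (auto split: if_splits)
    have e2: "{m\<in>S. \<not> bit (ff i j r) m} = {m\<in>S. \<not> bit r m} - {j}"
      using bf \<open>j\<in>S\<close> \<open>\<not> bit r j\<close> by (auto split: if_splits)
    have f1: "finite {m\<in>S. bit r m}" "finite {m\<in>S. \<not> bit r m}" using finS by auto
    have jin: "j \<in> {m\<in>S. \<not> bit r m}" using that by auto
    have c1: "card {m\<in>S. \<not> bit r m} \<ge> 1"
      using f1(2) jin by (metis One_nat_def Suc_leI card_gt_0_iff empty_iff)
    show ?thesis
      unfolding Nr_def Zr_def e1 e2 using f1 \<open>\<not> bit r j\<close> c1 jin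
      by (simp add: card_Diff_singleton of_nat_diff)
  qed
  have reidx: "(\<Sum>r<2^n. if bit r i then Nr r / (1 + Zr r) * B r else 0)
      \<le> (\<Sum>r<2^n. if bit r i then 0 else (Nr r + 1) * w r)"
  proof -
    have "(\<Sum>r<2^n. if bit r i then Nr r / (1 + Zr r) * B r else 0)
      = (\<Sum>j\<in>S. \<Sum>r<2^n. if bit r i \<and> bit r j then Nr r / (1 + Zr r) * w (ff i j r) else 0)"
      unfolding B_def sum_distrib_left by (subst sum.swap) (intro sum.cong refl, auto intro!: sum.cong)
    also have "\<dots> = (\<Sum>j\<in>S. \<Sum>r<2^n. if \<not> bit r i \<and> \<not> bit r j then (Nr r + 1) / Zr r * w r else 0)"
    proof (rule sum.cong[OF refl])
      fix j assume j: "j \<in> S"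
      have "(\<Sum>r<2^n. if bit r i \<and> bit r j then Nr r / (1 + Zr r) * w (ff i j r) else 0)
        = (\<Sum>r<2^n. if bit (ff i j r) i \<and> bit (ff i j r) j then Nr (ff i j r) / (1 + Zr (ff i j r)) * w (ff i j (ff i j r)) else 0)"
        by (rule sum_ff[OF i jn[OF j], symmetric])
      also have "\<dots> = (\<Sum>r<2^n. if \<not> bit r i \<and> \<not> bit r j then (Nr r + 1) / Zr r * w r else 0)"
      proof (rule sum.cong[OF refl])
        fix r
        show "(if bit (ff i j r) i \<and> bit (ff i j r) j then Nr (ff i j r) / (1 + Zr (ff i j r)) * w (ff i j (ff i j r)) else 0)
          = (if \<not> bit r i \<and> \<not> bit r j then (Nr r + 1) / Zr r * w r else 0)"
          using bit_ff[OF ji[OF j], of r i] bit_ff[OF ji[OF j], of r j] NZff[OF j, of r] by auto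
      qed
      finally show "(\<Sum>r<2^n. if bit r i \<and> bit r j then Nr r / (1 + Zr r) * w (ff i j r) else 0)
        = (\<Sum>r<2^n. if \<not> bit r i \<and> \<not> bit r j then (Nr r + 1) / Zr r * w r else 0)" .
    qed
    also have "\<dots> = (\<Sum>r<2^n. if bit r i then 0 else (Nr r + 1) / Zr r * w r * Zr r)"
    proof -
      have "(\<Sum>j\<in>S. \<Sum>r<2^n. if \<not> bit r i \<and> \<not> bit r j then (Nr r + 1) / Zr r * w r else 0)
        = (\<Sum>r<2^n. \<Sum>j\<in>S. if \<not> bit r i \<and> \<not> bit r j then (Nr r + 1) / Zr r * w r else 0)"
        by (rule sum.swap)
      also have "\<dots> = (\<Sum>r<2^n. if bit r i then 0 else (Nr r + 1) / Zr r * w r * Zr r)"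
      proof (rule sum.cong[OF refl])
        fix r
        show "(\<Sum>j\<in>S. if \<not> bit r i \<and> \<not> bit r j then (Nr r + 1) / Zr r * w r else 0)
          = (if bit r i then 0 else (Nr r + 1) / Zr r * w r * Zr r)"
          unfolding sum_if_count[OF finS] Zr_def by (cases "bit r i") simp_all
      qed
      finally show ?thesis .
    qed
    also have "\<dots> \<le> (\<Sum>r<2^n. if bit r i then 0 else (Nr r + 1) * w r)"
    proof (rule sum_mono)
      fix r
      show "(if bit r i then 0 else (Nr r + 1) / Zr r * w r * Zr r) \<le> (if bit r i then 0 else (Nr r + 1) * w r)"
        using N0[of r] w0[of r] by (cases "Zr r = 0") auto
    qed
    finally show ?thesis .
  qed
  have "(\<Sum>j\<in>S. yv n f i j) = 2 * (\<Sum>j\<in>S. Cf n f i j) - (\<Sum>j\<in>S. Mf n f i j)"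
    unfolding yv_def by (simp add: sum_subtractf sum_distrib_left)
  also have "\<dots> \<le> (\<Sum>r<2^n. if bit r i then (1 + Zr r) * w r + Nr r / (1 + Zr r) * B r else 0)
        - (\<Sum>r<2^n. w r * (if bit r i then Zr r else Nr r))"
    unfolding Csum Msum
  proof (rule diff_right_mono, rule sum_mono)
    fix r
    show "(if bit r i then 2 * Re (cnj (f r) * a r) else 0)
      \<le> (if bit r i then (1 + Zr r) * w r + Nr r / (1 + Zr r) * B r else 0)"
    proof (cases "bit r i")
      case True
      show ?thesis unfolding if_P[OF True] by (rule pw)
    qed simp
  qed
  also have "\<dots> = (\<Sum>r<2^n. if bit r i then (1 + Zr r) * w r else 0)
        + (\<Sum>r<2^n. if bit r i then Nr r / (1 + Zr r) * B r else 0)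
        - (\<Sum>r<2^n. w r * (if bit r i then Zr r else Nr r))"
    by (simp add: sum.distrib[symmetric] if_distrib cong: if_cong)
  also have "\<dots> \<le> (\<Sum>r<2^n. if bit r i then (1 + Zr r) * w r else 0)
        + (\<Sum>r<2^n. if bit r i then 0 else (Nr r + 1) * w r)
        - (\<Sum>r<2^n. w r * (if bit r i then Zr r else Nr r))"
    using reidx by linarith
  also have "\<dots> = (\<Sum>r<2^n. w r)"
    unfolding sum.distrib[symmetric] sum_subtractf[symmetric]
    by (intro sum.cong refl) (auto simp: algebra_simps)
  finally show ?thesis unfolding nrm_def w_def .
qed



lemma yv_sym: "yv n f i j = yv n f j i"
proof -
  have "Cf n f i j = Cf n f j i" unfolding Cf_def
    by (intro arg_cong[where f=Re] sum.cong refl) (auto simp: ff_sym[of i j])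
  moreover have "Mf n f i j = Mf n f j i" unfolding Mf_def
    by (intro sum.cong refl) auto
  ultimately show ?thesis by (simp add: yv_def)
qed

lemma fm_le1:
  assumes "frac_matching n z" "i < j" "j < n"
  shows "z i j \<le> 1"
proof -
  have row: "(\<Sum>j'\<in>{..<n} - {i}. z (min i j') (max i j')) \<le> 1" and nn: "\<And>a b. a < n \<Longrightarrow> b < n \<Longrightarrow> a < b \<Longrightarrow> z a b \<ge> 0"
    using assms unfolding frac_matching_def by auto
  have "z (min i j) (max i j) \<le> (\<Sum>j'\<in>{..<n} - {i}. z (min i j') (max i j'))"
  proof (rule member_le_sum)
    show "j \<in> {..<n} - {i}" using assms by auto
    fix x assume "x \<in> {..<n} - {i} - {j}"
    then show "0 \<le> z (min i x) (max i x)" using nn[of "min i x" "max i x"] assms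
      by (cases "i < x") (auto simp: min_def max_def)
  qed simp
  then show ?thesis using row assms by (simp add: min_def max_def)
qed

lemma LP_upper:
  assumes w0: "\<And>i j. i < n \<Longrightarrow> j < n \<Longrightarrow> w i j \<ge> 0" and fm: "frac_matching n z"
  shows "(\<Sum>i<n. \<Sum>j\<in>{i<..<n}. w i j * z i j) \<le> LP n w"
  unfolding LP_def
proof (rule cSup_upper)
  show "(\<Sum>i<n. \<Sum>j\<in>{i<..<n}. w i j * z i j) \<in> {\<Sum>i<n. \<Sum>j\<in>{i<..<n}. w i j * x i j |x. frac_matching n x}"
    using fm by blast
  show "bdd_above {\<Sum>i<n. \<Sum>j\<in>{i<..<n}. w i j * x i j |x. frac_matching n x}"
  proof (rule bdd_aboveI)
    fix t assume "t \<in> {\<Sum>i<n. \<Sum>j\<in>{i<..<n}. w i j * x i j |x. frac_matching n x}"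
    then obtain x where t: "t = (\<Sum>i<n. \<Sum>j\<in>{i<..<n}. w i j * x i j)" and fx: "frac_matching n x" by blast
    have "t \<le> (\<Sum>i<n. \<Sum>j\<in>{i<..<n}. w i j)"
      unfolding t
    proof (intro sum_mono)
      fix i j assume "i \<in> {..<n}" "j \<in> {i<..<n}"
      then have "i < j" "j < n" "i < n" by auto
      then show "w i j * x i j \<le> w i j"
        using fm_le1[OF fx] w0 by (simp add: mult_left_le)
    qed
    then show "t \<le> (\<Sum>i<n. \<Sum>j\<in>{i<..<n}. w i j)" .
  qed
qed



lemma eig_bound:
  assumes w0: "\<And>i j. i < n \<Longrightarrow> j < n \<Longrightarrow> w i j \<ge> 0"
    and ev: "eigenvector (ham n w) v k"
  shows "Re k \<le> ((\<Sum>i<n. \<Sum>j\<in>{i<..<n}. w i j) + LP n w) / 2"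
proof -
  let ?H = "ham n w"
  have dr: "dim_row ?H = 2^n" "dim_col ?H = 2^n" by (simp_all add: ham_def)
  from ev have vc: "v \<in> carrier_vec (2^n)" and vnz: "v \<noteq> 0\<^sub>v (2^n)" and Hv: "?H *\<^sub>v v = k \<cdot>\<^sub>v v"
    unfolding eigenvector_def dr by auto
  define f where "f r = v $ r" for r
  define N where "N = nrm n f"
  define W where "W = (\<Sum>i<n. \<Sum>j\<in>{i<..<n}. w i j)"
  define Qc where "Qc i j = (\<Sum>r<2^n. cnj (f r) * (\<Sum>c<2^n. epr_proj n i j $$ (r,c) * f c))" for i j
  have dv: "dim_vec v = 2^n" using vc by simp
  have Npos: "N > 0"
  proof -
    obtain r where r: "r < 2^n" "v $ r \<noteq> 0"
    proof (rule ccontr)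
      assume "\<not> thesis"
      with that have "\<And>r. r < 2^n \<Longrightarrow> v $ r = 0" by blast
      then have "v = 0\<^sub>v (2^n)" using dv by (intro eq_vecI) auto
      with vnz show False by simp
    qed
    have "(cmod (f r))^2 \<le> N" unfolding N_def nrm_def
      by (rule member_le_sum) (use r in auto)
    moreover have "(cmod (f r))^2 > 0" using r by (simp add: f_def)
    ultimately show ?thesis by linarith
  qed
  have lhs1: "(\<Sum>r<2^n. cnj (f r) * (?H *\<^sub>v v) $ r) = k * of_real N"
  proof -
    have "(\<Sum>r<2^n. cnj (f r) * (?H *\<^sub>v v) $ r) = (\<Sum>r<2^n. k * of_real ((cmod (f r))^2))"
    proof (rule sum.cong[OF refl])
      fix r assume "r \<in> {..<(2::nat)^n}"
      then have "r < 2^n" by simp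
      then have "(?H *\<^sub>v v) $ r = k * f r" unfolding Hv f_def using dv by simp
      then show "cnj (f r) * (?H *\<^sub>v v) $ r = k * of_real ((cmod (f r))^2)"
        unfolding complex_norm_square by (simp add: mult_ac)
    qed
    then show ?thesis by (simp add: N_def nrm_def sum_distrib_left)
  qed
  have lhs2: "(\<Sum>r<2^n. cnj (f r) * (?H *\<^sub>v v) $ r) = (\<Sum>i<n. \<Sum>j\<in>{i<..<n}. of_real (w i j) * Qc i j)"
  proof -
    have pt: "cnj (f r) * (?H *\<^sub>v v) $ r = (\<Sum>i<n. \<Sum>j\<in>{i<..<n}. of_real (w i j) *
        (cnj (f r) * (\<Sum>c<2^n. epr_proj n i j $$ (r,c) * f c)))" if r: "r < 2^n" for r
    proof -
      have "(?H *\<^sub>v v) $ r = (\<Sum>c<2^n. ?H $$ (r,c) * f c)"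
        using r dr dv by (simp add: scalar_prod_def f_def lessThan_atLeast0)
      also have "\<dots> = (\<Sum>c<2^n. \<Sum>i<n. \<Sum>j\<in>{i<..<n}. of_real (w i j) * (epr_proj n i j $$ (r,c) * f c))"
        using r by (intro sum.cong refl) (simp add: ham_def sum_distrib_right mult.assoc)
      also have "\<dots> = (\<Sum>i<n. \<Sum>j\<in>{i<..<n}. \<Sum>c<2^n. of_real (w i j) * (epr_proj n i j $$ (r,c) * f c))"
        by (subst sum.swap) (simp add: sum.swap[of _ "{..<2^n}"])
      also have "\<dots> = (\<Sum>i<n. \<Sum>j\<in>{i<..<n}. of_real (w i j) * (\<Sum>c<2^n. epr_proj n i j $$ (r,c) * f c))"
        by (simp add: sum_distrib_left)
      finally show ?thesis by (simp add: sum_distrib_left mult_ac)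
    qed
    have "(\<Sum>r<2^n. cnj (f r) * (?H *\<^sub>v v) $ r) = (\<Sum>r<2^n. \<Sum>i<n. \<Sum>j\<in>{i<..<n}. of_real (w i j) *
        (cnj (f r) * (\<Sum>c<2^n. epr_proj n i j $$ (r,c) * f c)))"
      by (intro sum.cong refl) (simp add: pt)
    also have "\<dots> = (\<Sum>i<n. \<Sum>j\<in>{i<..<n}. \<Sum>r<2^n. of_real (w i j) *
        (cnj (f r) * (\<Sum>c<2^n. epr_proj n i j $$ (r,c) * f c)))"
      by (subst sum.swap) (simp add: sum.swap[of _ "{..<2^n}"])
    also have "\<dots> = (\<Sum>i<n. \<Sum>j\<in>{i<..<n}. of_real (w i j) * Qc i j)"
      by (simp add: Qc_def sum_distrib_left)
    finally show ?thesis .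
  qed
  have ReQ: "Re (Qc i j) = (N + yv n f i j) / 2" if "i < n" "j \<in> {i<..<n}" for i j
    using Q_eq[of i n j f] that unfolding Qc_def N_def by auto
  have eq: "Re k * N = (\<Sum>i<n. \<Sum>j\<in>{i<..<n}. w i j * ((N + yv n f i j) / 2))"
  proof -
    have "Re k * N = Re (\<Sum>i<n. \<Sum>j\<in>{i<..<n}. of_real (w i j) * Qc i j)"
      using lhs1 lhs2 by simp
    also have "\<dots> = (\<Sum>i<n. \<Sum>j\<in>{i<..<n}. w i j * Re (Qc i j))"
      by (simp add: Re_sum)
    also have "\<dots> = (\<Sum>i<n. \<Sum>j\<in>{i<..<n}. w i j * ((N + yv n f i j) / 2))"
      by (intro sum.cong refl) (simp add: ReQ)
    finally show ?thesis .
  qed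
  define x where "x i j = max 0 (yv n f i j / N)" for i j
  have fm: "frac_matching n x"
    unfolding frac_matching_def
  proof (intro conjI allI impI)
    fix i j show "0 \<le> x i j" by (simp add: x_def)
  next
    fix i assume i: "i < n"
    define T where "T = {..<n} - {i}"
    define S where "S = {j\<in>T. yv n f i j > 0}"
    have "(\<Sum>j\<in>T. x (min i j) (max i j)) = (\<Sum>j\<in>T. max 0 (yv n f i j / N))"
      unfolding x_def by (intro sum.cong refl) (auto simp: min_def max_def yv_sym[of n f i])
    also have "\<dots> = (\<Sum>j\<in>T. if yv n f i j > 0 then yv n f i j / N else 0)"
      using Npos by (intro sum.cong refl) (auto simp: max_def divide_le_0_iff zero_less_divide_iff zero_le_divide_iff)
    also have "\<dots> = (\<Sum>j\<in>S. yv n f i j) / N"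
      unfolding S_def sum_divide_distrib by (rule sum.inter_filter[symmetric]) (simp add: T_def)
    also have "\<dots> \<le> N / N"
      using star[of i n S f] i Npos unfolding S_def T_def N_def by (intro divide_right_mono) auto
    also have "\<dots> = 1" using Npos by simp
    finally show "(\<Sum>j\<in>{..<n} - {i}. x (min i j) (max i j)) \<le> 1" unfolding T_def .
  qed
  have "Re k * N \<le> (\<Sum>i<n. \<Sum>j\<in>{i<..<n}. w i j * ((N + N * x i j) / 2))"
    unfolding eq
  proof (intro sum_mono)
    fix i j assume "i \<in> {..<n}" "j \<in> {i<..<n}"
    then have "w i j \<ge> 0" using w0 by auto
    moreover have "yv n f i j \<le> N * x i j"
      using Npos unfolding x_def by (simp add: max_def pos_divide_le_eq mult.commute zero_le_divide_iff)
    ultimately show "w i j * ((N + yv n f i j) / 2) \<le> w i j * ((N + N * x i j) / 2)"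
      by (intro mult_left_mono) auto
  qed
  also have "\<dots> = N * ((W + (\<Sum>i<n. \<Sum>j\<in>{i<..<n}. w i j * x i j)) / 2)"
    unfolding W_def by (simp add: sum_distrib_left sum.distrib algebra_simps add_divide_distrib sum_divide_distrib)
  finally have "Re k \<le> (W + (\<Sum>i<n. \<Sum>j\<in>{i<..<n}. w i j * x i j)) / 2"
    using Npos by (simp add: mult.commute[of _ N])
  also have "\<dots> \<le> (W + LP n w) / 2"
    using LP_upper[OF w0 fm] by simp
  finally show ?thesis unfolding W_def .
qed

theorem mainTheorem7:
  fixes n :: nat and w :: "nat \<Rightarrow> nat \<Rightarrow> real"
  assumes "\<And>i j. i < n \<Longrightarrow> j < n \<Longrightarrow> w i j = w j i"
    and "\<And>i j. i < n \<Longrightarrow> j < n \<Longrightarrow> w i j \<ge> 0"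
  shows "lambda_max (ham n w) \<le> ((\<Sum>i<n. \<Sum>j\<in>{i<..<n}. w i j) + LP n w) / 2"
proof -
  have Hc: "ham n w \<in> carrier_mat (2^n) (2^n)" by (simp add: ham_def)
  have fin: "finite (spectrum (ham n w))" using card_finite_spectrum[OF Hc] by simp
  have ne: "spectrum (ham n w) \<noteq> {}" using spectrum_non_empty[OF Hc] by simp
  have lm: "lambda_max (ham n w) = Max (Re ` spectrum (ham n w))"
    by (simp add: lambda_max_def spectrum_def)
  show ?thesis unfolding lm
  proof (subst Max_le_iff)
    show "finite (Re ` spectrum (ham n w))" using fin by simp
    show "Re ` spectrum (ham n w) \<noteq> {}" using ne by simp
    show "\<forall>a\<in>Re ` spectrum (ham n w). a \<le> ((\<Sum>i<n. \<Sum>j\<in>{i<..<n}. w i j) + LP n w) / 2"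
      using eig_bound[OF assms(2)] unfolding spectrum_def eigenvalue_def by auto
  qed
qed

end
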